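(* Let $p$ be an odd prime and let $\alpha_1,\alpha_2,\beta_2,\beta_3,\gamma_1,\gamma_3\in p\mathbb{Z}_p$ be such that the free $\mathbb{Z}_p$-module $L_A$ with basis $x_1,x_2,x_3$ and alternating bilinear bracket $[x_1,x_2]=\alpha_1x_1+\alpha_2x_2$, $[x_2,x_3]=\beta_2x_2+\beta_3x_3$, $[x_3,x_1]=\gamma_1x_1+\gamma_3x_3$ is a $\mathbb{Z}_p$-Lie algebra. Then there exist $\eta,\rho,\mu,\lambda\in p\mathbb{Z}_p$ with $\eta\rho-\mu\lambda=0$ such that $L_A$ is isomorphic to one of the following $\mathbb{Z}_p$-Lie algebras, each free of rank $3$ on $x,y,z$ with the indicated brackets: (1) $L_1(\eta,\rho,\mu,\lambda)$: $[x,y]=\eta y$, $[y,z]=\mu y$, $[z,x]=\lambda z+\rho x$; (2) $L_2(\eta,\mu)$: $[x,y]=0$, $[y,z]=\eta y+\mu z$, $[z,x]=0$; (3) $L_3(\eta,\mu)$: $[x,y]=0$, $[y,z]=\eta z$, $[z,x]=\mu z$; (4) for $\eta\mu\lambda\ne0$, $L_4(\eta,\mu,\lambda)$: $[x,y]=\eta x+\mu y$, $[y,z]=\lambda y-\eta z$, $[z,x]=-\lambda x-\mu z$; (5) for $\eta\mu\lambda\ne0$, $L_\ast(\eta,\mu,\lambda)$: $[x,y]=\eta x+\mu y$, $[y,z]=\lambda y+\eta z$, $[z,x]=\lambda x+\mu z$. *)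

theory Defs
  imports "HOL-Algebra.Ring" "HOL-Computational_Algebra.Primes"
begin

text \<open>The ring of p-adic integers, modelled as the inverse limit of the rings Z/p^n Z:
  a p-adic integer is a compatible sequence of canonical residues a n in {0..<p^n}.\<close>

definition Zp :: "nat \<Rightarrow> (nat \<Rightarrow> int) ring" where
  "Zp p = \<lparr> partial_object.carrier = {a. \<forall>n. a n \<in> {0..<int p ^ n} \<and> a (Suc n) mod (int p ^ n) = a n},
            monoid.mult = (\<lambda>a b n. (a n * b n) mod (int p ^ n)),
            monoid.one = (\<lambda>n. 1 mod (int p ^ n)),
            ring.zero = (\<lambda>n. 0),
            ring.add = (\<lambda>a b n. (a n + b n) mod (int p ^ n)) \<rparr>"

definition pZp :: "nat \<Rightarrow> (nat \<Rightarrow> int) set" where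
  "pZp p = {a \<in> carrier (Zp p). a 1 = 0}"

definition V3 :: "('a, 'm) ring_scheme \<Rightarrow> (nat \<Rightarrow> 'a) set" where
  "V3 R = {0..<3} \<rightarrow>\<^sub>E carrier R"

definition vec3 :: "'a \<Rightarrow> 'a \<Rightarrow> 'a \<Rightarrow> nat \<Rightarrow> 'a" where
  "vec3 a b c = (\<lambda>i\<in>{0..<3}. [a, b, c] ! i)"

definition vzero :: "('a, 'm) ring_scheme \<Rightarrow> nat \<Rightarrow> 'a" where
  "vzero R = (\<lambda>i\<in>{0..<3}. \<zero>\<^bsub>R\<^esub>)"

definition vadd :: "('a, 'm) ring_scheme \<Rightarrow> (nat \<Rightarrow> 'a) \<Rightarrow> (nat \<Rightarrow> 'a) \<Rightarrow> nat \<Rightarrow> 'a" where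
  "vadd R v w = (\<lambda>i\<in>{0..<3}. v i \<oplus>\<^bsub>R\<^esub> w i)"

definition vneg :: "('a, 'm) ring_scheme \<Rightarrow> (nat \<Rightarrow> 'a) \<Rightarrow> nat \<Rightarrow> 'a" where
  "vneg R v = (\<lambda>i\<in>{0..<3}. \<ominus>\<^bsub>R\<^esub> v i)"

definition smul :: "('a, 'm) ring_scheme \<Rightarrow> 'a \<Rightarrow> (nat \<Rightarrow> 'a) \<Rightarrow> nat \<Rightarrow> 'a" where
  "smul R a v = (\<lambda>i\<in>{0..<3}. a \<otimes>\<^bsub>R\<^esub> v i)"

definition tab :: "('a, 'm) ring_scheme \<Rightarrow> (nat \<Rightarrow> 'a) \<Rightarrow> (nat \<Rightarrow> 'a) \<Rightarrow> (nat \<Rightarrow> 'a)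
                     \<Rightarrow> nat \<Rightarrow> nat \<Rightarrow> nat \<Rightarrow> 'a" where
  "tab R a b c i j =
     (if (i, j) = (0, 1) then a else if (i, j) = (1, 0) then vneg R a
      else if (i, j) = (1, 2) then b else if (i, j) = (2, 1) then vneg R b
      else if (i, j) = (2, 0) then c else if (i, j) = (0, 2) then vneg R c
      else vzero R)"

text \<open>The bilinear bracket on R^3 determined by a table T (T i j = [e_i, e_j]).\<close>
definition br :: "('a, 'm) ring_scheme \<Rightarrow> (nat \<Rightarrow> nat \<Rightarrow> nat \<Rightarrow> 'a)
                    \<Rightarrow> (nat \<Rightarrow> 'a) \<Rightarrow> (nat \<Rightarrow> 'a) \<Rightarrow> nat \<Rightarrow> 'a" where
  "br R T v w = (\<lambda>k\<in>{0..<3}. \<Oplus>\<^bsub>R\<^esub>i\<in>{0..<3}. \<Oplus>\<^bsub>R\<^esub>j\<in>{0..<3}.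
                    v i \<otimes>\<^bsub>R\<^esub> w j \<otimes>\<^bsub>R\<^esub> T i j k)"

definition is_lie :: "('a, 'm) ring_scheme \<Rightarrow> (nat \<Rightarrow> nat \<Rightarrow> nat \<Rightarrow> 'a) \<Rightarrow> bool" where
  "is_lie R T \<longleftrightarrow>
     (\<forall>v\<in>V3 R. br R T v v = vzero R) \<and>
     (\<forall>u\<in>V3 R. \<forall>v\<in>V3 R. \<forall>w\<in>V3 R.
        vadd R (vadd R (br R T u (br R T v w)) (br R T v (br R T w u))) (br R T w (br R T u v))
        = vzero R)"

definition lie_iso :: "('a, 'm) ring_scheme \<Rightarrow> (nat \<Rightarrow> nat \<Rightarrow> nat \<Rightarrow> 'a)
                         \<Rightarrow> (nat \<Rightarrow> nat \<Rightarrow> nat \<Rightarrow> 'a) \<Rightarrow> bool" where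
  "lie_iso R T1 T2 \<longleftrightarrow> (\<exists>f. bij_betw f (V3 R) (V3 R) \<and>
     (\<forall>v\<in>V3 R. \<forall>w\<in>V3 R. f (vadd R v w) = vadd R (f v) (f w)) \<and>
     (\<forall>a\<in>carrier R. \<forall>v\<in>V3 R. f (smul R a v) = smul R a (f v)) \<and>
     (\<forall>v\<in>V3 R. \<forall>w\<in>V3 R. f (br R T1 v w) = br R T2 (f v) (f w)))"

end

theory Submission
  imports Defs
begin


lemma Zp_simps:
  "carrier (Zp p) = {a. \<forall>n. a n \<in> {0..<int p ^ n} \<and> a (Suc n) mod (int p ^ n) = a n}"
  "x \<otimes>\<^bsub>Zp p\<^esub> y = (\<lambda>n. (x n * y n) mod (int p ^ n))"
  "x \<oplus>\<^bsub>Zp p\<^esub> y = (\<lambda>n. (x n + y n) mod (int p ^ n))"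
  "\<one>\<^bsub>Zp p\<^esub> = (\<lambda>n. 1 mod (int p ^ n))"
  "\<zero>\<^bsub>Zp p\<^esub> = (\<lambda>n. 0)"
  by (simp_all add: Zp_def)

lemma Zp_memD:
  assumes "x \<in> carrier (Zp p)" "p > 0"
  shows "x n mod int p ^ n = x n" "0 \<le> x n" "x n < int p ^ n"
  using assms by (auto simp: Zp_simps)

lemma Zp_coh:
  assumes "x \<in> carrier (Zp p)" "k \<le> n"
  shows "x n mod int p ^ k = x k"
  using assms(2)
proof (induction n rule: dec_induct)
  case base
  then show ?case using assms(1) by (auto simp: Zp_simps)
next
  case (step n)
  have "x (Suc n) mod int p ^ k = (x (Suc n) mod int p ^ n) mod int p ^ k"
    using step(1) by (simp add: mod_mod_cancel le_imp_power_dvd)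
  also have "\<dots> = x n mod int p ^ k" using assms(1) by (auto simp: Zp_simps)
  finally show ?case using step by simp
qed

lemma Zp_suc: "x \<in> carrier (Zp p) \<Longrightarrow> x (Suc n) mod int p ^ n = x n"
  by (simp add: Zp_simps)

lemma Zp_memI:
  assumes "p > 0" "\<And>n. x n = X n mod int p ^ n" "\<And>n. X (Suc n) mod int p ^ n = X n mod int p ^ n"
  shows "x \<in> carrier (Zp p)"
proof -
  have "\<And>n. x (Suc n) mod int p ^ n = x n"
    using assms by (simp add: mod_mod_cancel le_imp_power_dvd)
  then show ?thesis using assms by (auto simp: Zp_simps)
qed

lemma Zp_cring:
  assumes "p > 0"
  shows "cring (Zp p)"
proof (rule cringI)
  note mem = Zp_memD[OF _ assms]
  have cl_add: "x \<oplus>\<^bsub>Zp p\<^esub> y \<in> carrier (Zp p)" if "x \<in> carrier (Zp p)" "y \<in> carrier (Zp p)" for x y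
    unfolding Zp_simps(3)
    by (rule Zp_memI[OF assms, where X="\<lambda>n. x n + y n"]) (use that in \<open>simp_all add: Zp_simps, subst mod_add_eq[symmetric], simp add: Zp_suc\<close>)
  have cl_mul: "x \<otimes>\<^bsub>Zp p\<^esub> y \<in> carrier (Zp p)" if "x \<in> carrier (Zp p)" "y \<in> carrier (Zp p)" for x y
    unfolding Zp_simps(2)
    by (rule Zp_memI[OF assms, where X="\<lambda>n. x n * y n"]) (use that in \<open>simp_all add: Zp_simps, subst mod_mult_eq[symmetric], simp add: Zp_suc\<close>)
  have cl_one: "\<one>\<^bsub>Zp p\<^esub> \<in> carrier (Zp p)"
    unfolding Zp_simps(4)
    by (rule Zp_memI[OF assms, where X="\<lambda>n. 1"]) simp_all
  have cl_zero: "\<zero>\<^bsub>Zp p\<^esub> \<in> carrier (Zp p)"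
    using assms by (simp add: Zp_simps)
  show "abelian_group (Zp p)"
  proof (rule abelian_groupI)
    fix x assume x: "x \<in> carrier (Zp p)"
    show "\<zero>\<^bsub>Zp p\<^esub> \<oplus>\<^bsub>Zp p\<^esub> x = x" using mem[OF x] by (simp add: Zp_simps)
    let ?y = "\<lambda>n. (- x n) mod int p ^ n"
    have "?y \<in> carrier (Zp p)"
      by (rule Zp_memI[OF assms, where X="\<lambda>n. - x n"]) (use x in \<open>simp_all add: Zp_simps, subst mod_minus_eq[symmetric], simp add: Zp_suc\<close>)
    moreover have "?y \<oplus>\<^bsub>Zp p\<^esub> x = \<zero>\<^bsub>Zp p\<^esub>" by (simp add: Zp_simps mod_simps)
    ultimately show "\<exists>y\<in>carrier (Zp p). y \<oplus>\<^bsub>Zp p\<^esub> x = \<zero>\<^bsub>Zp p\<^esub>" by blast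
  next
    fix x y z assume "x \<in> carrier (Zp p)" "y \<in> carrier (Zp p)" "z \<in> carrier (Zp p)"
    show "x \<oplus>\<^bsub>Zp p\<^esub> y \<oplus>\<^bsub>Zp p\<^esub> z = x \<oplus>\<^bsub>Zp p\<^esub> (y \<oplus>\<^bsub>Zp p\<^esub> z)"
      by (simp add: Zp_simps mod_simps add.assoc)
  next
    fix x y assume "x \<in> carrier (Zp p)" "y \<in> carrier (Zp p)"
    show "x \<oplus>\<^bsub>Zp p\<^esub> y = y \<oplus>\<^bsub>Zp p\<^esub> x"
      by (simp add: Zp_simps add.commute)
  qed (rule cl_add, assumption+, rule cl_zero)
  show "comm_monoid (Zp p)"
  proof (rule comm_monoidI)
    fix x assume x: "x \<in> carrier (Zp p)"
    show "\<one>\<^bsub>Zp p\<^esub> \<otimes>\<^bsub>Zp p\<^esub> x = x" using mem[OF x] by (simp add: Zp_simps mod_simps)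
  next
    fix x y z assume "x \<in> carrier (Zp p)" "y \<in> carrier (Zp p)" "z \<in> carrier (Zp p)"
    show "x \<otimes>\<^bsub>Zp p\<^esub> y \<otimes>\<^bsub>Zp p\<^esub> z = x \<otimes>\<^bsub>Zp p\<^esub> (y \<otimes>\<^bsub>Zp p\<^esub> z)"
      by (simp add: Zp_simps mod_simps mult.assoc)
  next
    fix x y assume "x \<in> carrier (Zp p)" "y \<in> carrier (Zp p)"
    show "x \<otimes>\<^bsub>Zp p\<^esub> y = y \<otimes>\<^bsub>Zp p\<^esub> x"
      by (simp add: Zp_simps mult.commute)
  qed (rule cl_mul, assumption+, rule cl_one)
qed (auto simp: Zp_simps mod_simps distrib_right)

lemma Zp_negmem:
  assumes "p > 0" "x \<in> carrier (Zp p)"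
  shows "(\<lambda>n. (- x n) mod int p ^ n) \<in> carrier (Zp p)"
  by (rule Zp_memI[OF assms(1), where X="\<lambda>n. - x n"])
     (use assms(2) in \<open>simp_all add: Zp_simps, subst mod_minus_eq[symmetric], simp add: Zp_suc\<close>)

lemma Zp_neg:
  assumes "p > 0" "x \<in> carrier (Zp p)"
  shows "\<ominus>\<^bsub>Zp p\<^esub> x = (\<lambda>n. (- x n) mod int p ^ n)"
proof -
  interpret cring "Zp p" by (rule Zp_cring[OF assms(1)])
  show ?thesis
    by (rule minus_equality) (use assms Zp_negmem in \<open>simp_all add: Zp_simps mod_simps\<close>)
qed



lemma mod_extra:
  fixes a b x m :: int
  shows "(- (a mod m * b)) mod m = (- (a * b)) mod m"
    "(- (b * (a mod m))) mod m = (- (b * a)) mod m"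
    "(x - a mod m * b) mod m = (x - a * b) mod m"
    "(x - b * (a mod m)) mod m = (x - b * a) mod m"
    "(x + a mod m * b) mod m = (x + a * b) mod m"
    "(x + b * (a mod m)) mod m = (x + b * a) mod m"
    "(a mod m * b - x) mod m = (a * b - x) mod m"
    "(b * (a mod m) - x) mod m = (b * a - x) mod m"
    "(a mod m * b + x) mod m = (a * b + x) mod m"
    "(b * (a mod m) + x) mod m = (b * a + x) mod m"
  apply (rule mod_minus_cong[OF mod_mult_cong[OF mod_mod_trivial refl]])
  apply (rule mod_minus_cong[OF mod_mult_cong[OF refl mod_mod_trivial]])
  apply (rule mod_diff_cong[OF refl mod_mult_cong[OF mod_mod_trivial refl]])
  apply (rule mod_diff_cong[OF refl mod_mult_cong[OF refl mod_mod_trivial]])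
  apply (rule mod_add_cong[OF refl mod_mult_cong[OF mod_mod_trivial refl]])
  apply (rule mod_add_cong[OF refl mod_mult_cong[OF refl mod_mod_trivial]])
  apply (rule mod_diff_cong[OF mod_mult_cong[OF mod_mod_trivial refl] refl])
  apply (rule mod_diff_cong[OF mod_mult_cong[OF refl mod_mod_trivial] refl])
  apply (rule mod_add_cong[OF mod_mult_cong[OF mod_mod_trivial refl] refl])
  apply (rule mod_add_cong[OF mod_mult_cong[OF refl mod_mod_trivial] refl])
  done

lemma br_tab:
  assumes p: "p > 0"
    and v: "v \<in> V3 (Zp p)" and w: "w \<in> V3 (Zp p)"
    and a: "a \<in> V3 (Zp p)" and b: "b \<in> V3 (Zp p)" and c: "c \<in> V3 (Zp p)"
  shows "br (Zp p) (tab (Zp p) a b c) v w = (\<lambda>k\<in>{0..<3}. \<lambda>n.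
     ((v 0 n * w 1 n - v 1 n * w 0 n) * a k n + (v 1 n * w 2 n - v 2 n * w 1 n) * b k n
      + (v 2 n * w 0 n - v 0 n * w 2 n) * c k n) mod int p ^ n)"
proof -
  interpret cring "Zp p" by (rule Zp_cring[OF p])
  have V: "u i \<in> carrier (Zp p)" if "u \<in> V3 (Zp p)" "i < 3" for u i
    using that by (auto simp: V3_def)
  have e3: "{0..<3::nat} = {0,1,2}" by auto
  show ?thesis
  proof (rule ext)
    fix k
    show "br (Zp p) (tab (Zp p) a b c) v w k = (\<lambda>k\<in>{0..<3}. \<lambda>n.
     ((v 0 n * w 1 n - v 1 n * w 0 n) * a k n + (v 1 n * w 2 n - v 2 n * w 1 n) * b k n
      + (v 2 n * w 0 n - v 0 n * w 2 n) * c k n) mod int p ^ n) k"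
    proof (cases "k < 3")
      case False then show ?thesis by (simp add: br_def)
    next
      case True
      have T: "tab (Zp p) a b c i j k \<in> carrier (Zp p)" for i j
        using True V[OF a] V[OF b] V[OF c]
        by (simp add: tab_def vneg_def vzero_def)
      have Vs: "v 0 \<in> carrier (Zp p)" "v 1 \<in> carrier (Zp p)" "v 2 \<in> carrier (Zp p)"
        "w 0 \<in> carrier (Zp p)" "w 1 \<in> carrier (Zp p)" "w 2 \<in> carrier (Zp p)"
        "a k \<in> carrier (Zp p)" "b k \<in> carrier (Zp p)" "c k \<in> carrier (Zp p)"
        using V[OF v] V[OF w] V[OF a] V[OF b] V[OF c] True by auto
      have "br (Zp p) (tab (Zp p) a b c) v w k =
        (v 0 \<otimes>\<^bsub>Zp p\<^esub> w 0 \<otimes>\<^bsub>Zp p\<^esub> \<zero>\<^bsub>Zp p\<^esub> \<oplus>\<^bsub>Zp p\<^esub> (v 0 \<otimes>\<^bsub>Zp p\<^esub> w 1 \<otimes>\<^bsub>Zp p\<^esub> a k \<oplus>\<^bsub>Zp p\<^esub> (v 0 \<otimes>\<^bsub>Zp p\<^esub> w 2 \<otimes>\<^bsub>Zp p\<^esub> (\<ominus>\<^bsub>Zp p\<^esub> c k) \<oplus>\<^bsub>Zp p\<^esub> \<zero>\<^bsub>Zp p\<^esub>)))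
        \<oplus>\<^bsub>Zp p\<^esub> ((v 1 \<otimes>\<^bsub>Zp p\<^esub> w 0 \<otimes>\<^bsub>Zp p\<^esub> (\<ominus>\<^bsub>Zp p\<^esub> a k) \<oplus>\<^bsub>Zp p\<^esub> (v 1 \<otimes>\<^bsub>Zp p\<^esub> w 1 \<otimes>\<^bsub>Zp p\<^esub> \<zero>\<^bsub>Zp p\<^esub> \<oplus>\<^bsub>Zp p\<^esub> (v 1 \<otimes>\<^bsub>Zp p\<^esub> w 2 \<otimes>\<^bsub>Zp p\<^esub> b k \<oplus>\<^bsub>Zp p\<^esub> \<zero>\<^bsub>Zp p\<^esub>)))
        \<oplus>\<^bsub>Zp p\<^esub> ((v 2 \<otimes>\<^bsub>Zp p\<^esub> w 0 \<otimes>\<^bsub>Zp p\<^esub> c k \<oplus>\<^bsub>Zp p\<^esub> (v 2 \<otimes>\<^bsub>Zp p\<^esub> w 1 \<otimes>\<^bsub>Zp p\<^esub> (\<ominus>\<^bsub>Zp p\<^esub> b k) \<oplus>\<^bsub>Zp p\<^esub> (v 2 \<otimes>\<^bsub>Zp p\<^esub> w 2 \<otimes>\<^bsub>Zp p\<^esub> \<zero>\<^bsub>Zp p\<^esub> \<oplus>\<^bsub>Zp p\<^esub> \<zero>\<^bsub>Zp p\<^esub>))) \<oplus>\<^bsub>Zp p\<^esub> \<zero>\<^bsub>Zp p\<^esub>))"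
        using True Vs T
        by (simp add: br_def e3 finsum_insert Pi_def tab_def vneg_def vzero_def finsum_closed) arith
      also have "\<dots> = (\<lambda>n.
     ((v 0 n * w 1 n - v 1 n * w 0 n) * a k n + (v 1 n * w 2 n - v 2 n * w 1 n) * b k n
      + (v 2 n * w 0 n - v 0 n * w 2 n) * c k n) mod int p ^ n)"
        using Vs apply (simp add: Zp_neg[OF p] Zp_simps(2-5) mod_simps mod_extra)
        apply (rule ext)
        apply (rule arg_cong[where f="\<lambda>z. z mod (int p ^ _)"])
        by (simp add: algebra_simps)
      finally show ?thesis using True by simp
    qed
  qed
qed



lemma vec3_simps[simp]: "vec3 a b c 0 = a" "vec3 a b c (Suc 0) = b" "vec3 a b c 2 = c"
  "vec3 a b c 1 = b" "i \<ge> 3 \<Longrightarrow> vec3 a b c i = undefined"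
  by (auto simp: vec3_def numeral_2_eq_2)

lemma V3_vec3[simp]: "vec3 a b c \<in> V3 R \<longleftrightarrow> a \<in> carrier R \<and> b \<in> carrier R \<and> c \<in> carrier R"
proof -
  have e: "{0..<3::nat} = {0,1,2}" by auto
  show ?thesis by (auto simp: V3_def vec3_def PiE_def Pi_def e extensional_def)
qed

lemma V3_eqI:
  fixes v w :: "nat \<Rightarrow> 'a"
  assumes "v \<in> V3 R" "w \<in> V3 R" "v 0 = w 0" "v 1 = w 1" "v 2 = w 2"
  shows "v = w"
proof (rule ext)
  fix i show "v i = w i"
  proof (cases "i < 3")
    case True then have "i = 0 \<or> i = 1 \<or> i = 2" by auto
    then show ?thesis using assms by auto
  next
    case False then show ?thesis using assms by (auto simp: V3_def PiE_def extensional_def)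
  qed
qed

lemma V3_mem: "v \<in> V3 R \<Longrightarrow> i < 3 \<Longrightarrow> v i \<in> carrier R"
  by (auto simp: V3_def)

lemma V3_0: "v \<in> V3 R \<Longrightarrow> v 0 \<in> carrier R" and V3_1: "v \<in> V3 R \<Longrightarrow> v 1 \<in> carrier R"
  and V3_2: "v \<in> V3 R \<Longrightarrow> v 2 \<in> carrier R"
  by (rule V3_mem, assumption, simp)+

lemma ext3:
  fixes v w :: "nat \<Rightarrow> 'a"
  assumes "\<And>i. i \<ge> 3 \<Longrightarrow> v i = w i" "v 0 = w 0" "v 1 = w 1" "v 2 = w 2"
  shows "v = w"
proof (rule ext)
  fix i show "v i = w i"
  proof (cases "i < 3")
    case True then have "i = 0 \<or> i = 1 \<or> i = 2" by auto
    then show ?thesis using assms by auto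
  next
    case False then show ?thesis using assms by auto
  qed
qed

lemma V3_1': "v \<in> V3 R \<Longrightarrow> v (Suc 0) \<in> carrier R"
  using V3_1 by simp

lemma V3_restrict: "(\<And>k. k < 3 \<Longrightarrow> f k \<in> carrier R) \<Longrightarrow> (\<lambda>k\<in>{0..<3}. f k) \<in> V3 R"
  by (auto simp: V3_def)

definition rot :: "(nat \<Rightarrow> 'a) \<Rightarrow> nat \<Rightarrow> 'a" where
  "rot v = vec3 (v 1) (v 2) (v 0)"

lemma rot_V3: "v \<in> V3 R \<Longrightarrow> rot v \<in> V3 R"
  unfolding rot_def V3_vec3 by (intro conjI V3_0 V3_1 V3_2)

lemma rot3: "v \<in> V3 R \<Longrightarrow> rot (rot (rot v)) = v"
  apply (rule V3_eqI[of _ R])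
  apply (intro rot_V3, assumption)
  apply assumption
  by (simp_all add: rot_def)

lemma lie_iso_refl: "lie_iso R T T"
  unfolding lie_iso_def by (rule exI[of _ id]) auto

lemma lie_iso_trans:
  assumes "lie_iso R T1 T2" "lie_iso R T2 T3"
  shows "lie_iso R T1 T3"
proof -
  obtain f where f: "bij_betw f (V3 R) (V3 R)"
     "\<forall>v\<in>V3 R. \<forall>w\<in>V3 R. f (vadd R v w) = vadd R (f v) (f w)"
     "\<forall>a\<in>carrier R. \<forall>v\<in>V3 R. f (smul R a v) = smul R a (f v)"
     "\<forall>v\<in>V3 R. \<forall>w\<in>V3 R. f (br R T1 v w) = br R T2 (f v) (f w)"
    using assms(1) unfolding lie_iso_def by blast
  obtain g where g: "bij_betw g (V3 R) (V3 R)"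
     "\<forall>v\<in>V3 R. \<forall>w\<in>V3 R. g (vadd R v w) = vadd R (g v) (g w)"
     "\<forall>a\<in>carrier R. \<forall>v\<in>V3 R. g (smul R a v) = smul R a (g v)"
     "\<forall>v\<in>V3 R. \<forall>w\<in>V3 R. g (br R T2 v w) = br R T3 (g v) (g w)"
    using assms(2) unfolding lie_iso_def by blast
  have fV: "f v \<in> V3 R" if "v \<in> V3 R" for v using f(1) that by (auto simp: bij_betw_def)
  show ?thesis unfolding lie_iso_def
    by (rule exI[of _ "g \<circ> f"]) (use f g fV in \<open>auto intro: bij_betw_trans\<close>)
qed

lemma rot_iso:
  assumes p: "p > 0" and a: "a \<in> V3 (Zp p)" and b: "b \<in> V3 (Zp p)" and c: "c \<in> V3 (Zp p)"
  shows "lie_iso (Zp p) (tab (Zp p) a b c) (tab (Zp p) (rot b) (rot c) (rot a))"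
  unfolding lie_iso_def
proof (intro exI[of _ rot] conjI ballI)
  show "bij_betw rot (V3 (Zp p)) (V3 (Zp p))"
    by (rule bij_betwI[where g="\<lambda>v. rot (rot v)"]) (auto simp: rot_V3 rot3)
next
  fix v w assume v: "v \<in> V3 (Zp p)" and w: "w \<in> V3 (Zp p)"
  show "rot (vadd (Zp p) v w) = vadd (Zp p) (rot v) (rot w)"
    by (rule ext3) (simp_all add: rot_def vadd_def)
  show "rot (br (Zp p) (tab (Zp p) a b c) v w) = br (Zp p) (tab (Zp p) (rot b) (rot c) (rot a)) (rot v) (rot w)"
    apply (simp add: br_tab[OF p v w a b c] br_tab[OF p rot_V3[OF v] rot_V3[OF w] rot_V3[OF b] rot_V3[OF c] rot_V3[OF a]])
    apply (rule ext3)
       apply (simp add: rot_def)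
      apply (simp_all add: rot_def algebra_simps)
    done
next
  fix x v assume x: "x \<in> carrier (Zp p)" and v: "v \<in> V3 (Zp p)"
  show "rot (smul (Zp p) x v) = smul (Zp p) x (rot v)"
    by (rule ext3) (simp_all add: rot_def smul_def)
qed



lemma tab_closed:
  assumes "a \<in> V3 R" "b \<in> V3 R" "c \<in> V3 R" "k < 3" "\<zero>\<^bsub>R\<^esub> \<in> carrier R"
    "\<And>x. x \<in> carrier R \<Longrightarrow> \<ominus>\<^bsub>R\<^esub> x \<in> carrier R"
  shows "tab R a b c i j k \<in> carrier R"
  using assms V3_mem[OF assms(1)] V3_mem[OF assms(2)] V3_mem[OF assms(3)]
  by (simp add: tab_def vneg_def vzero_def)

lemma br_closed:
  assumes p: "p > 0" and v: "v \<in> V3 (Zp p)" and w: "w \<in> V3 (Zp p)"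
    and a: "a \<in> V3 (Zp p)" and b: "b \<in> V3 (Zp p)" and c: "c \<in> V3 (Zp p)"
  shows "br (Zp p) (tab (Zp p) a b c) v w \<in> V3 (Zp p)"
proof -
  interpret cring "Zp p" by (rule Zp_cring[OF p])
  show ?thesis unfolding br_def
    apply (rule V3_restrict)
    apply (intro finsum_closed Pi_I m_closed V3_mem[OF v] V3_mem[OF w] tab_closed[OF a b c])
    by auto
qed

lemma one_mod: "p > 1 \<Longrightarrow> n > 0 \<Longrightarrow> 1 mod int p ^ n = 1"
  by (simp add: one_less_power)

lemma jacobi_eqs:
  assumes p1: "p > 1"
    and c: "\<alpha>1 \<in> carrier (Zp p)" "\<alpha>2 \<in> carrier (Zp p)" "\<beta>2 \<in> carrier (Zp p)"
       "\<beta>3 \<in> carrier (Zp p)" "\<gamma>1 \<in> carrier (Zp p)" "\<gamma>3 \<in> carrier (Zp p)"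
    and L: "is_lie (Zp p) (tab (Zp p) (vec3 \<alpha>1 \<alpha>2 \<zero>\<^bsub>Zp p\<^esub>) (vec3 \<zero>\<^bsub>Zp p\<^esub> \<beta>2 \<beta>3)
                                    (vec3 \<gamma>1 \<zero>\<^bsub>Zp p\<^esub> \<gamma>3))"
  shows "(\<alpha>1 n * \<beta>2 n - \<beta>3 n * \<gamma>1 n) mod int p ^ n = 0"
    "(\<beta>2 n * \<gamma>3 n - \<gamma>1 n * \<alpha>2 n) mod int p ^ n = 0"
    "(\<alpha>1 n * \<gamma>3 n - \<alpha>2 n * \<beta>3 n) mod int p ^ n = 0"
proof -
  have p: "p > 0" using p1 by simp
  interpret cring "Zp p" by (rule Zp_cring[OF p])
  have M: "\<alpha>1 n mod int p ^ n = \<alpha>1 n" "\<alpha>2 n mod int p ^ n = \<alpha>2 n" "\<beta>2 n mod int p ^ n = \<beta>2 n"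
    "\<beta>3 n mod int p ^ n = \<beta>3 n" "\<gamma>1 n mod int p ^ n = \<gamma>1 n" "\<gamma>3 n mod int p ^ n = \<gamma>3 n"
    using Zp_memD(1)[OF _ p] c by auto
  define A where "A = vec3 \<alpha>1 \<alpha>2 \<zero>\<^bsub>Zp p\<^esub>"
  define B where "B = vec3 \<zero>\<^bsub>Zp p\<^esub> \<beta>2 \<beta>3"
  define C where "C = vec3 \<gamma>1 \<zero>\<^bsub>Zp p\<^esub> \<gamma>3"
  define e0 where "e0 = vec3 \<one>\<^bsub>Zp p\<^esub> \<zero>\<^bsub>Zp p\<^esub> \<zero>\<^bsub>Zp p\<^esub>"
  define e1 where "e1 = vec3 \<zero>\<^bsub>Zp p\<^esub> \<one>\<^bsub>Zp p\<^esub> \<zero>\<^bsub>Zp p\<^esub>"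
  define e2 where "e2 = vec3 \<zero>\<^bsub>Zp p\<^esub> \<zero>\<^bsub>Zp p\<^esub> \<one>\<^bsub>Zp p\<^esub>"
  have V: "A \<in> V3 (Zp p)" "B \<in> V3 (Zp p)" "C \<in> V3 (Zp p)" "e0 \<in> V3 (Zp p)" "e1 \<in> V3 (Zp p)" "e2 \<in> V3 (Zp p)"
    using c by (simp_all add: A_def B_def C_def e0_def e1_def e2_def)
  let ?T = "tab (Zp p) A B C"
  have I: "br (Zp p) ?T e1 e2 \<in> V3 (Zp p)" "br (Zp p) ?T e2 e0 \<in> V3 (Zp p)" "br (Zp p) ?T e0 e1 \<in> V3 (Zp p)"
    using V by (simp_all add: br_closed[OF p])
  have J: "vadd (Zp p) (vadd (Zp p) (br (Zp p) ?T e0 (br (Zp p) ?T e1 e2)) (br (Zp p) ?T e1 (br (Zp p) ?T e2 e0)))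
     (br (Zp p) ?T e2 (br (Zp p) ?T e0 e1)) = vzero (Zp p)"
    using L V unfolding is_lie_def A_def B_def C_def by blast
  note O = br_tab[OF p V(4) I(1) V(1-3)] br_tab[OF p V(5) I(2) V(1-3)] br_tab[OF p V(6) I(3) V(1-3)]
  note Inn = br_tab[OF p V(5) V(6) V(1-3)] br_tab[OF p V(6) V(4) V(1-3)] br_tab[OF p V(4) V(5) V(1-3)]
  have J2: "vadd (Zp p) (vadd (Zp p) (br (Zp p) ?T e0 (br (Zp p) ?T e1 e2)) (br (Zp p) ?T e1 (br (Zp p) ?T e2 e0)))
     (br (Zp p) ?T e2 (br (Zp p) ?T e0 e1)) k n = 0" if "k < 3" for k
    using fun_cong[OF fun_cong[OF J, of k], of n] that by (simp add: vzero_def Zp_simps)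
  show "(\<alpha>1 n * \<beta>2 n - \<beta>3 n * \<gamma>1 n) mod int p ^ n = 0"
    using J2[of 0] unfolding O
    apply (cases "n = 0", simp)
    apply (simp add: Inn vadd_def)
    apply (simp add: A_def B_def C_def e0_def e1_def e2_def Zp_simps mod_simps mod_extra one_mod[OF p1] M)
    by (simp add: ac_simps)
  show "(\<beta>2 n * \<gamma>3 n - \<gamma>1 n * \<alpha>2 n) mod int p ^ n = 0"
    using J2[of 1] unfolding O
    apply (cases "n = 0", simp)
    apply (simp add: Inn vadd_def)
    apply (simp add: A_def B_def C_def e0_def e1_def e2_def Zp_simps mod_simps mod_extra one_mod[OF p1] M)
    by (simp add: ac_simps)
  show "(\<alpha>1 n * \<gamma>3 n - \<alpha>2 n * \<beta>3 n) mod int p ^ n = 0"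
    using J2[of 2] unfolding O
    apply (cases "n = 0", simp)
    apply (simp add: Inn vadd_def)
    apply (simp add: A_def B_def C_def e0_def e1_def e2_def Zp_simps mod_simps mod_extra one_mod[OF p1] M)
    done
qed



definition Z :: "nat \<Rightarrow> (nat \<Rightarrow> int) \<Rightarrow> bool" where
  "Z p X \<longleftrightarrow> (\<forall>n. int p ^ n dvd X n)"
definition coh :: "nat \<Rightarrow> (nat \<Rightarrow> int) \<Rightarrow> bool" where
  "coh p X \<longleftrightarrow> (\<forall>n k. k \<le> n \<longrightarrow> X n mod int p ^ k = X k mod int p ^ k)"

lemma coh_carrier: assumes "x \<in> carrier (Zp p)" shows "coh p x"
  unfolding coh_def
proof (intro allI impI)
  fix n k :: nat assume "k \<le> n"
  show "x n mod int p ^ k = x k mod int p ^ k"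
  proof -
    have a: "x n mod int p ^ k = x k" by (rule Zp_coh[OF assms \<open>k \<le> n\<close>])
    have b: "x k mod int p ^ k = x k" by (rule Zp_coh[OF assms order_refl])
    show ?thesis by (simp only: a b)
  qed
qed

lemma coh_add: "coh p X \<Longrightarrow> coh p Y \<Longrightarrow> coh p (\<lambda>n. X n + Y n)"
  unfolding coh_def by (metis mod_add_cong)
lemma coh_diff: "coh p X \<Longrightarrow> coh p Y \<Longrightarrow> coh p (\<lambda>n. X n - Y n)"
  unfolding coh_def by (metis mod_diff_cong)
lemma coh_mult: "coh p X \<Longrightarrow> coh p Y \<Longrightarrow> coh p (\<lambda>n. X n * Y n)"
  unfolding coh_def by (metis mod_mult_cong)

lemma ZD:
  assumes pr: "prime p" and X: "coh p X" and Y: "coh p Y" and XY: "Z p (\<lambda>n. X n * Y n)"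
  shows "Z p X \<or> Z p Y"
proof (rule ccontr)
  assume "\<not> (Z p X \<or> Z p Y)"
  then obtain i j where i: "\<not> int p ^ i dvd X i" and j: "\<not> int p ^ j dvd Y j"
    unfolding Z_def by blast
  define N where "N = i + j"
  have xi: "\<not> int p ^ i dvd X N"
    using i X unfolding coh_def N_def by (metis dvd_eq_mod_eq_0 le_add1)
  have yj: "\<not> int p ^ j dvd Y N"
    using j Y unfolding coh_def N_def by (metis dvd_eq_mod_eq_0 le_add2)
  have x0: "X N \<noteq> 0" using xi by auto
  have y0: "Y N \<noteq> 0" using yj by auto
  have pe: "prime_elem (int p)" using pr by (simp add: prime_imp_prime_elem)
  have nu: "\<not> is_unit (int p)" using pr not_prime_unit[of "int p"] by auto
  have mx: "multiplicity (int p) (X N) < i"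
    using xi power_dvd_iff_le_multiplicity[OF x0 nu, of i] by simp
  have my: "multiplicity (int p) (Y N) < j"
    using yj power_dvd_iff_le_multiplicity[OF y0 nu, of j] by simp
  have "multiplicity (int p) (X N * Y N) < N"
    using prime_elem_multiplicity_mult_distrib[OF pe x0 y0] mx my N_def by simp
  then have "\<not> int p ^ N dvd X N * Y N"
    using power_dvd_iff_le_multiplicity[of "X N * Y N" "int p" N] x0 y0 nu by auto
  then show False using XY unfolding Z_def by blast
qed

lemma Z_eq:
  assumes "p > 0" "x \<in> carrier (Zp p)" "y \<in> carrier (Zp p)" "Z p (\<lambda>n. x n - y n)"
  shows "x = y"
proof
  fix n
  have "x n mod int p ^ n = y n mod int p ^ n"
    using assms(4) unfolding Z_def by (simp add: mod_eq_dvd_iff)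
  then show "x n = y n" using Zp_memD(1)[OF assms(2,1), of n] Zp_memD(1)[OF assms(3,1), of n] by simp
qed

lemma Z_neg:
  assumes "p > 0" "x \<in> carrier (Zp p)" "y \<in> carrier (Zp p)" "Z p (\<lambda>n. x n + y n)"
  shows "y = \<ominus>\<^bsub>Zp p\<^esub> x"
proof
  fix n
  have "y n mod int p ^ n = (- x n) mod int p ^ n"
    using assms(4) unfolding Z_def by (simp add: mod_eq_dvd_iff add.commute)
  moreover have "(\<ominus>\<^bsub>Zp p\<^esub> x) n = (- x n) mod int p ^ n" using Zp_neg[OF assms(1,2)] by simp
  ultimately show "y n = (\<ominus>\<^bsub>Zp p\<^esub> x) n" using Zp_memD(1)[OF assms(3,1), of n] by simp
qed

lemma Z_zero:
  assumes "p > 0" "x \<in> carrier (Zp p)"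
  shows "x = \<zero>\<^bsub>Zp p\<^esub> \<longleftrightarrow> Z p x"
proof
  assume "x = \<zero>\<^bsub>Zp p\<^esub>" then show "Z p x" by (simp add: Z_def Zp_simps)
next
  assume "Z p x"
  then have "Z p (\<lambda>n. x n - \<zero>\<^bsub>Zp p\<^esub> n)" by (simp add: Zp_simps(5))
  moreover have "\<zero>\<^bsub>Zp p\<^esub> \<in> carrier (Zp p)"
    using cring.axioms(1)[OF Zp_cring[OF assms(1)]] by (simp add: ring.ring_simprules(2))
  ultimately show "x = \<zero>\<^bsub>Zp p\<^esub>" using Z_eq[OF assms(1,2)] by blast
qed

lemma Z_mod: "Z p X \<longleftrightarrow> (\<forall>n. X n mod int p ^ n = 0)"
  by (simp add: Z_def dvd_eq_mod_eq_0)

lemma Z_add: "Z p X \<Longrightarrow> Z p Y \<Longrightarrow> Z p (\<lambda>n. X n + Y n)"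
  by (simp add: Z_def)
lemma Z_diff: "Z p X \<Longrightarrow> Z p Y \<Longrightarrow> Z p (\<lambda>n. X n - Y n)"
  by (simp add: Z_def)
lemma Z_multl: "Z p X \<Longrightarrow> Z p (\<lambda>n. Y n * X n)"
  by (simp add: Z_def)
lemma Z_multr: "Z p X \<Longrightarrow> Z p (\<lambda>n. X n * Y n)"
  by (simp add: Z_def)
lemma Z_cong: "Z p X \<Longrightarrow> (\<And>n. X n = Y n) \<Longrightarrow> Z p Y"
  by (simp add: Z_def)



lemma Zp_det:
  assumes p: "p > 0" and c: "x \<in> carrier (Zp p)" "y \<in> carrier (Zp p)" "z \<in> carrier (Zp p)" "w \<in> carrier (Zp p)"
  shows "(x \<otimes>\<^bsub>Zp p\<^esub> y \<ominus>\<^bsub>Zp p\<^esub> z \<otimes>\<^bsub>Zp p\<^esub> w = \<zero>\<^bsub>Zp p\<^esub>) \<longleftrightarrow> Z p (\<lambda>n. x n * y n - z n * w n)"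
proof -
  interpret cring "Zp p" by (rule Zp_cring[OF p])
  have "x \<otimes>\<^bsub>Zp p\<^esub> y \<ominus>\<^bsub>Zp p\<^esub> z \<otimes>\<^bsub>Zp p\<^esub> w = (\<lambda>n. (x n * y n - z n * w n) mod int p ^ n)"
    using c Zp_neg[OF p m_closed[OF c(3,4)]] by (simp add: a_minus_def Zp_simps(2-5) mod_simps mod_extra)
  then show ?thesis by (simp add: Zp_simps(5) Z_mod fun_eq_iff)
qed

lemma Zp_prod3:
  assumes p: "p > 0" and c: "x \<in> carrier (Zp p)" "y \<in> carrier (Zp p)" "z \<in> carrier (Zp p)"
  shows "(x \<otimes>\<^bsub>Zp p\<^esub> y \<otimes>\<^bsub>Zp p\<^esub> z = \<zero>\<^bsub>Zp p\<^esub>) \<longleftrightarrow> Z p (\<lambda>n. x n * y n * z n)"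
proof -
  have "x \<otimes>\<^bsub>Zp p\<^esub> y \<otimes>\<^bsub>Zp p\<^esub> z = (\<lambda>n. (x n * y n * z n) mod int p ^ n)"
    by (simp add: Zp_simps(2-5) mod_simps)
  then show ?thesis by (simp add: Zp_simps(5) Z_mod fun_eq_iff)
qed

lemma ex4I: "P a b c d \<Longrightarrow> a \<in> A \<Longrightarrow> b \<in> A \<Longrightarrow> c \<in> A \<Longrightarrow> d \<in> A \<Longrightarrow>
  \<exists>x\<in>A. \<exists>y\<in>A. \<exists>z\<in>A. \<exists>w\<in>A. P x y z w"
  by blast

lemma rot_vec3[simp]: "rot (vec3 a b c) = vec3 b c a"
  by (simp add: rot_def)

lemma Zsub1: assumes "Z p (\<lambda>n. X n - Y n)" "Z p X" shows "Z p Y"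
  unfolding Z_def
proof
  fix n
  have a: "int p ^ n dvd X n - Y n" and b: "int p ^ n dvd X n" using assms unfolding Z_def by auto
  have "int p ^ n dvd X n - (X n - Y n)" using dvd_diff[OF b a] .
  then show "int p ^ n dvd Y n" by simp
qed

lemma Zsub2: assumes "Z p (\<lambda>n. X n - Y n)" "Z p Y" shows "Z p X"
  unfolding Z_def
proof
  fix n
  have a: "int p ^ n dvd X n - Y n" and b: "int p ^ n dvd Y n" using assms unfolding Z_def by auto
  have "int p ^ n dvd (X n - Y n) + Y n" using dvd_add[OF a b] .
  then show "int p ^ n dvd X n" by simp
qed


lemma zdm: "prime p \<Longrightarrow> coh p X \<Longrightarrow> coh p Y \<Longrightarrow> Z p (\<lambda>n. X n * Y n) \<Longrightarrow> \<not> Z p X \<Longrightarrow> Z p Y"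
  using ZD by blast

theorem mainTheorem19:
  fixes p :: nat and \<alpha>1 \<alpha>2 \<beta>2 \<beta>3 \<gamma>1 \<gamma>3 :: "nat \<Rightarrow> int"
  assumes "prime p" and "odd p"
    and "\<alpha>1 \<in> pZp p" and "\<alpha>2 \<in> pZp p" and "\<beta>2 \<in> pZp p" and "\<beta>3 \<in> pZp p"
    and "\<gamma>1 \<in> pZp p" and "\<gamma>3 \<in> pZp p"
    and "is_lie (Zp p) (tab (Zp p) (vec3 \<alpha>1 \<alpha>2 \<zero>\<^bsub>Zp p\<^esub>) (vec3 \<zero>\<^bsub>Zp p\<^esub> \<beta>2 \<beta>3)
                                    (vec3 \<gamma>1 \<zero>\<^bsub>Zp p\<^esub> \<gamma>3))"
  shows "\<exists>\<eta>\<in>pZp p. \<exists>\<rho>\<in>pZp p. \<exists>\<mu>\<in>pZp p. \<exists>lam\<in>pZp p.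
    (let R = Zp p; LA = tab R (vec3 \<alpha>1 \<alpha>2 \<zero>\<^bsub>R\<^esub>) (vec3 \<zero>\<^bsub>R\<^esub> \<beta>2 \<beta>3) (vec3 \<gamma>1 \<zero>\<^bsub>R\<^esub> \<gamma>3) in
     ((\<eta> \<otimes>\<^bsub>R\<^esub> \<rho> \<ominus>\<^bsub>R\<^esub> \<mu> \<otimes>\<^bsub>R\<^esub> lam = \<zero>\<^bsub>R\<^esub> \<and>
      lie_iso R LA (tab R (vec3 \<zero>\<^bsub>R\<^esub> \<eta> \<zero>\<^bsub>R\<^esub>) (vec3 \<zero>\<^bsub>R\<^esub> \<mu> \<zero>\<^bsub>R\<^esub>) (vec3 \<rho> \<zero>\<^bsub>R\<^esub> lam)))
     \<or> lie_iso R LA (tab R (vzero R) (vec3 \<zero>\<^bsub>R\<^esub> \<eta> \<mu>) (vzero R))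
     \<or> lie_iso R LA (tab R (vzero R) (vec3 \<zero>\<^bsub>R\<^esub> \<zero>\<^bsub>R\<^esub> \<eta>) (vec3 \<zero>\<^bsub>R\<^esub> \<zero>\<^bsub>R\<^esub> \<mu>))
     \<or> (\<eta> \<otimes>\<^bsub>R\<^esub> \<mu> \<otimes>\<^bsub>R\<^esub> lam \<noteq> \<zero>\<^bsub>R\<^esub> \<and>
        lie_iso R LA (tab R (vec3 \<eta> \<mu> \<zero>\<^bsub>R\<^esub>) (vec3 \<zero>\<^bsub>R\<^esub> lam (\<ominus>\<^bsub>R\<^esub> \<eta>))
                              (vec3 (\<ominus>\<^bsub>R\<^esub> lam) \<zero>\<^bsub>R\<^esub> (\<ominus>\<^bsub>R\<^esub> \<mu>))))
     \<or> (\<eta> \<otimes>\<^bsub>R\<^esub> \<mu> \<otimes>\<^bsub>R\<^esub> lam \<noteq> \<zero>\<^bsub>R\<^esub> \<and>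
        lie_iso R LA (tab R (vec3 \<eta> \<mu> \<zero>\<^bsub>R\<^esub>) (vec3 \<zero>\<^bsub>R\<^esub> lam \<eta>) (vec3 lam \<zero>\<^bsub>R\<^esub> \<mu>)))))"
proof -
  note pr = assms(1)
  have p1: "p > 1" using prime_gt_1_nat[OF pr] by simp
  have p: "p > 0" using p1 by simp
  interpret cring "Zp p" by (rule Zp_cring[OF p])
  have ca: "\<alpha>1 \<in> carrier (Zp p)" "\<alpha>2 \<in> carrier (Zp p)" "\<beta>2 \<in> carrier (Zp p)"
    "\<beta>3 \<in> carrier (Zp p)" "\<gamma>1 \<in> carrier (Zp p)" "\<gamma>3 \<in> carrier (Zp p)"
    using assms(3-8) by (auto simp: pZp_def)
  have coh: "coh p \<alpha>1" "coh p \<alpha>2" "coh p \<beta>2" "coh p \<beta>3" "coh p \<gamma>1" "coh p \<gamma>3"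
    using ca by (auto intro: coh_carrier)
  have J1: "Z p (\<lambda>n. \<alpha>1 n * \<beta>2 n - \<beta>3 n * \<gamma>1 n)"
    and J2: "Z p (\<lambda>n. \<beta>2 n * \<gamma>3 n - \<gamma>1 n * \<alpha>2 n)"
    and J3: "Z p (\<lambda>n. \<alpha>1 n * \<gamma>3 n - \<alpha>2 n * \<beta>3 n)"
    using jacobi_eqs[OF p1 ca assms(9)] by (auto simp: Z_mod)
  have Zz: "x = \<zero>\<^bsub>Zp p\<^esub> \<longleftrightarrow> Z p x" if "x \<in> carrier (Zp p)" for x
    using Z_zero[OF p that] .
  define LA where "LA = tab (Zp p) (vec3 \<alpha>1 \<alpha>2 \<zero>\<^bsub>Zp p\<^esub>) (vec3 \<zero>\<^bsub>Zp p\<^esub> \<beta>2 \<beta>3) (vec3 \<gamma>1 \<zero>\<^bsub>Zp p\<^esub> \<gamma>3)"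
  have VA: "vec3 \<alpha>1 \<alpha>2 \<zero>\<^bsub>Zp p\<^esub> \<in> V3 (Zp p)" "vec3 \<zero>\<^bsub>Zp p\<^esub> \<beta>2 \<beta>3 \<in> V3 (Zp p)"
     "vec3 \<gamma>1 \<zero>\<^bsub>Zp p\<^esub> \<gamma>3 \<in> V3 (Zp p)"
    using ca by simp_all
  have R1: "lie_iso (Zp p) LA (tab (Zp p) (vec3 \<beta>2 \<beta>3 \<zero>\<^bsub>Zp p\<^esub>) (vec3 \<zero>\<^bsub>Zp p\<^esub> \<gamma>3 \<gamma>1) (vec3 \<alpha>2 \<zero>\<^bsub>Zp p\<^esub> \<alpha>1))"
    using rot_iso[OF p VA] unfolding LA_def by simp
  have R2: "lie_iso (Zp p) LA (tab (Zp p) (vec3 \<gamma>3 \<gamma>1 \<zero>\<^bsub>Zp p\<^esub>) (vec3 \<zero>\<^bsub>Zp p\<^esub> \<alpha>1 \<alpha>2) (vec3 \<beta>3 \<zero>\<^bsub>Zp p\<^esub> \<beta>2))"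
  proof -
    have "vec3 \<beta>2 \<beta>3 \<zero>\<^bsub>Zp p\<^esub> \<in> V3 (Zp p)" "vec3 \<zero>\<^bsub>Zp p\<^esub> \<gamma>3 \<gamma>1 \<in> V3 (Zp p)"
      "vec3 \<alpha>2 \<zero>\<^bsub>Zp p\<^esub> \<alpha>1 \<in> V3 (Zp p)" using ca by simp_all
    from rot_iso[OF p this] have "lie_iso (Zp p) (tab (Zp p) (vec3 \<beta>2 \<beta>3 \<zero>\<^bsub>Zp p\<^esub>) (vec3 \<zero>\<^bsub>Zp p\<^esub> \<gamma>3 \<gamma>1) (vec3 \<alpha>2 \<zero>\<^bsub>Zp p\<^esub> \<alpha>1))
       (tab (Zp p) (vec3 \<gamma>3 \<gamma>1 \<zero>\<^bsub>Zp p\<^esub>) (vec3 \<zero>\<^bsub>Zp p\<^esub> \<alpha>1 \<alpha>2) (vec3 \<beta>3 \<zero>\<^bsub>Zp p\<^esub> \<beta>2))"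
      by simp
    then show ?thesis using lie_iso_trans[OF R1] by blast
  qed
  have negZ: "Z p (\<lambda>n. - X n)" if "Z p X" for X using that by (simp add: Z_def)
  show ?thesis
  proof (cases "Z p \<alpha>1 \<and> Z p \<beta>3")
    case True
    then have e: "\<alpha>1 = \<zero>\<^bsub>Zp p\<^esub>" "\<beta>3 = \<zero>\<^bsub>Zp p\<^esub>" using Zz ca by auto
    have d: "\<alpha>2 \<otimes>\<^bsub>Zp p\<^esub> \<gamma>1 \<ominus>\<^bsub>Zp p\<^esub> \<beta>2 \<otimes>\<^bsub>Zp p\<^esub> \<gamma>3 = \<zero>\<^bsub>Zp p\<^esub>"
      unfolding Zp_det[OF p ca(2,5,3,6)]
      by (rule Z_cong[OF negZ[OF J2]]) (simp add: algebra_simps)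
    show ?thesis
      apply (rule ex4I[where a=\<alpha>2 and b=\<gamma>1 and c=\<beta>2 and d=\<gamma>3])
      using d assms(3-8) lie_iso_refl unfolding LA_def e by (auto simp: Let_def)
  next
    case F1: False
    show ?thesis
    proof (cases "Z p \<beta>2 \<and> Z p \<gamma>1")
      case True
      then have e: "\<beta>2 = \<zero>\<^bsub>Zp p\<^esub>" "\<gamma>1 = \<zero>\<^bsub>Zp p\<^esub>" using Zz ca by auto
      have d: "\<beta>3 \<otimes>\<^bsub>Zp p\<^esub> \<alpha>2 \<ominus>\<^bsub>Zp p\<^esub> \<gamma>3 \<otimes>\<^bsub>Zp p\<^esub> \<alpha>1 = \<zero>\<^bsub>Zp p\<^esub>"
        unfolding Zp_det[OF p ca(4,2,6,1)]
        by (rule Z_cong[OF negZ[OF J3]]) (simp add: algebra_simps)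
      show ?thesis
        apply (rule ex4I[where a=\<beta>3 and b=\<alpha>2 and c=\<gamma>3 and d=\<alpha>1])
        using d assms(3-8) R1 unfolding LA_def e by (auto simp: Let_def)
    next
      case F2: False
      show ?thesis
      proof (cases "Z p \<alpha>2 \<and> Z p \<gamma>3")
        case True
        then have e: "\<alpha>2 = \<zero>\<^bsub>Zp p\<^esub>" "\<gamma>3 = \<zero>\<^bsub>Zp p\<^esub>" using Zz ca by auto
        have d: "\<gamma>1 \<otimes>\<^bsub>Zp p\<^esub> \<beta>3 \<ominus>\<^bsub>Zp p\<^esub> \<alpha>1 \<otimes>\<^bsub>Zp p\<^esub> \<beta>2 = \<zero>\<^bsub>Zp p\<^esub>"
          unfolding Zp_det[OF p ca(5,4,1,3)]
          by (rule Z_cong[OF negZ[OF J1]]) (simp add: algebra_simps)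
        show ?thesis
          apply (rule ex4I[where a=\<gamma>1 and b=\<beta>3 and c=\<alpha>1 and d=\<beta>2])
          using d assms(3-8) R2 unfolding LA_def e by (auto simp: Let_def)
      next
        case F3: False
        note zd = zdm[OF pr]
        have nd: "\<not> Z p \<beta>2"
        proof
          assume Zd: "Z p \<beta>2"
          have "Z p (\<lambda>n. \<beta>3 n * \<gamma>1 n)" by (rule Zsub1[OF J1 Z_multl[OF Zd]])
          then have Zb: "Z p \<beta>3" using zd[OF coh(5) coh(4)] F2 Zd by (auto simp: mult.commute)
          have "Z p (\<lambda>n. \<gamma>1 n * \<alpha>2 n)" by (rule Zsub1[OF J2 Z_multr[OF Zd]])
          then have Ze: "Z p \<alpha>2" using zd[OF coh(5) coh(2)] F2 Zd by auto
          have "Z p (\<lambda>n. \<alpha>1 n * \<gamma>3 n)" by (rule Zsub2[OF J3 Z_multl[OF Zb]])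
          then show False using zd[OF coh(1) coh(6)] F1 F3 Zb Ze by auto
        qed
        have nf: "\<not> Z p \<gamma>3"
        proof
          assume Zf: "Z p \<gamma>3"
          have "Z p (\<lambda>n. \<alpha>2 n * \<beta>3 n)" by (rule Zsub1[OF J3 Z_multl[OF Zf]])
          then have Zb: "Z p \<beta>3" using zd[OF coh(2) coh(4)] F3 Zf by auto
          have "Z p (\<lambda>n. \<gamma>1 n * \<alpha>2 n)" by (rule Zsub1[OF J2 Z_multl[OF Zf]])
          then have Zc: "Z p \<gamma>1" using zd[OF coh(2) coh(5)] F3 Zf by (auto simp: mult.commute)
          have "Z p (\<lambda>n. \<alpha>1 n * \<beta>2 n)" by (rule Zsub2[OF J1 Z_multr[OF Zb]])
          then show False using zd[OF coh(1) coh(3)] F1 F2 Zb Zc by auto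
        qed
        have K: "Z p (\<lambda>n. (\<alpha>1 n * \<alpha>1 n - \<beta>3 n * \<beta>3 n) * \<beta>2 n * \<gamma>3 n)"
        proof -
          have "Z p (\<lambda>n. \<alpha>1 n * \<gamma>3 n * (\<alpha>1 n * \<beta>2 n - \<beta>3 n * \<gamma>1 n)
              + \<beta>3 n * \<gamma>1 n * (\<alpha>1 n * \<gamma>3 n - \<alpha>2 n * \<beta>3 n)
              - \<beta>3 n * \<beta>3 n * (\<beta>2 n * \<gamma>3 n - \<gamma>1 n * \<alpha>2 n))"
            by (intro Z_add Z_diff Z_multl J1 J2 J3)
          then show ?thesis by (rule Z_cong) (simp add: algebra_simps)
        qed
        have cK: "coh p (\<lambda>n. (\<alpha>1 n * \<alpha>1 n - \<beta>3 n * \<beta>3 n) * \<beta>2 n)"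
          "coh p (\<lambda>n. \<alpha>1 n * \<alpha>1 n - \<beta>3 n * \<beta>3 n)"
          "coh p (\<lambda>n. \<alpha>1 n - \<beta>3 n)" "coh p (\<lambda>n. \<alpha>1 n + \<beta>3 n)"
          by (intro coh_mult coh_diff coh_add coh)+
        have "Z p (\<lambda>n. (\<alpha>1 n * \<alpha>1 n - \<beta>3 n * \<beta>3 n) * \<beta>2 n)"
          using ZD[OF pr cK(1) coh(6) K] nf by blast
        then have "Z p (\<lambda>n. \<alpha>1 n * \<alpha>1 n - \<beta>3 n * \<beta>3 n)"
          using ZD[OF pr cK(2) coh(3)] nd by blast
        then have "Z p (\<lambda>n. (\<alpha>1 n - \<beta>3 n) * (\<alpha>1 n + \<beta>3 n))"
          by (rule Z_cong) (simp add: algebra_simps)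
        then have Zab: "Z p (\<lambda>n. \<alpha>1 n - \<beta>3 n) \<or> Z p (\<lambda>n. \<alpha>1 n + \<beta>3 n)"
          using ZD[OF pr cK(3,4)] by blast
        show ?thesis
        proof (cases "Z p (\<lambda>n. \<alpha>1 n - \<beta>3 n)")
          case Zm: True
          have na: "\<not> Z p \<alpha>1" using Zm F1 Zsub1[OF Zm] by blast
          have "Z p (\<lambda>n. \<alpha>1 n * (\<beta>2 n - \<gamma>1 n))"
            by (rule Z_cong[OF Z_diff[OF J1 Z_multl[OF Zm, of \<gamma>1]]]) (simp add: algebra_simps)
          then have "Z p (\<lambda>n. \<beta>2 n - \<gamma>1 n)" using zd[OF coh(1) coh_diff[OF coh(3,5)]] na by blast
          then have e2: "\<gamma>1 = \<beta>2" using Z_eq[OF p ca(3,5)] by simp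
          have "Z p (\<lambda>n. \<alpha>1 n * (\<gamma>3 n - \<alpha>2 n))"
            by (rule Z_cong[OF Z_diff[OF J3 Z_multl[OF Zm, of \<alpha>2]]]) (simp add: algebra_simps)
          then have "Z p (\<lambda>n. \<gamma>3 n - \<alpha>2 n)" using zd[OF coh(1) coh_diff[OF coh(6,2)]] na by blast
          then have e3: "\<gamma>3 = \<alpha>2" using Z_eq[OF p ca(6,2)] by simp
          have e1: "\<beta>3 = \<alpha>1" using Z_eq[OF p ca(1,4) Zm] by simp
          have ne: "\<not> Z p \<alpha>2" using F3 e3 by auto
          have "\<not> Z p (\<lambda>n. \<alpha>1 n * \<alpha>2 n * \<beta>2 n)"
          proof
            assume "Z p (\<lambda>n. \<alpha>1 n * \<alpha>2 n * \<beta>2 n)"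
            then have "Z p (\<lambda>n. \<alpha>1 n * \<alpha>2 n)" using ZD[OF pr coh_mult[OF coh(1,2)] coh(3)] nd by blast
            then show False using ZD[OF pr coh(1,2)] na ne by blast
          qed
          then have nz: "\<alpha>1 \<otimes>\<^bsub>Zp p\<^esub> \<alpha>2 \<otimes>\<^bsub>Zp p\<^esub> \<beta>2 \<noteq> \<zero>\<^bsub>Zp p\<^esub>"
            using Zp_prod3[OF p ca(1,2,3)] by simp
          show ?thesis
            apply (rule ex4I[where a=\<alpha>1 and b=\<alpha>1 and c=\<alpha>2 and d=\<beta>2])
            using nz assms(3-8) lie_iso_refl unfolding LA_def e1 e2 e3 by (auto simp: Let_def)
        next
          case Zm: False
          then have Zp': "Z p (\<lambda>n. \<alpha>1 n + \<beta>3 n)" using Zab by blast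
          have Zpp: "Z p (\<lambda>n. (\<alpha>1 n + \<beta>3 n) - \<alpha>1 n)" if "Z p \<alpha>1"
            using Z_diff[OF Zp' that] .
          have na: "\<not> Z p \<alpha>1"
          proof
            assume a: "Z p \<alpha>1"
            have "Z p \<beta>3" using Z_cong[OF Zpp[OF a]] by simp
            then show False using F1 a by blast
          qed
          have "Z p (\<lambda>n. \<alpha>1 n * (\<beta>2 n + \<gamma>1 n))"
            by (rule Z_cong[OF Z_add[OF J1 Z_multl[OF Zp', of \<gamma>1]]]) (simp add: algebra_simps)
          then have "Z p (\<lambda>n. \<beta>2 n + \<gamma>1 n)" using zd[OF coh(1) coh_add[OF coh(3,5)]] na by blast
          then have e2: "\<gamma>1 = \<ominus>\<^bsub>Zp p\<^esub> \<beta>2" using Z_neg[OF p ca(3,5)] by simp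
          have "Z p (\<lambda>n. \<alpha>1 n * (\<alpha>2 n + \<gamma>3 n))"
            by (rule Z_cong[OF Z_add[OF J3 Z_multl[OF Zp', of \<alpha>2]]]) (simp add: algebra_simps)
          then have Zae: "Z p (\<lambda>n. \<alpha>2 n + \<gamma>3 n)" using zd[OF coh(1) coh_add[OF coh(2,6)]] na by blast
          then have e3: "\<gamma>3 = \<ominus>\<^bsub>Zp p\<^esub> \<alpha>2" using Z_neg[OF p ca(2,6)] by simp
          have e1: "\<beta>3 = \<ominus>\<^bsub>Zp p\<^esub> \<alpha>1" using Z_neg[OF p ca(1,4) Zp'] by simp
          have ne: "\<not> Z p \<alpha>2"
          proof
            assume a: "Z p \<alpha>2"
            have "Z p \<gamma>3" using Z_cong[OF Z_diff[OF Zae a]] by simp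
            then show False using F3 a by blast
          qed
          have "\<not> Z p (\<lambda>n. \<alpha>1 n * \<alpha>2 n * \<beta>2 n)"
          proof
            assume "Z p (\<lambda>n. \<alpha>1 n * \<alpha>2 n * \<beta>2 n)"
            then have "Z p (\<lambda>n. \<alpha>1 n * \<alpha>2 n)" using ZD[OF pr coh_mult[OF coh(1,2)] coh(3)] nd by blast
            then show False using ZD[OF pr coh(1,2)] na ne by blast
          qed
          then have nz: "\<alpha>1 \<otimes>\<^bsub>Zp p\<^esub> \<alpha>2 \<otimes>\<^bsub>Zp p\<^esub> \<beta>2 \<noteq> \<zero>\<^bsub>Zp p\<^esub>"
            using Zp_prod3[OF p ca(1,2,3)] by simp
          show ?thesis
            apply (rule ex4I[where a=\<alpha>1 and b=\<alpha>1 and c=\<alpha>2 and d=\<beta>2])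
            using nz assms(3-8) lie_iso_refl unfolding LA_def e1 e2 e3 by (auto simp: Let_def)
        qed
      qed
    qed
  qed
qed


end
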